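(* Let $\mathsf{Ax}\subseteq\{\mathsf{N}_\Diamond,\mathsf{C}_\Diamond,\mathsf{I}_{\Diamond\Box}\}$. Then $\mathsf{CK}\oplus\mathsf{Ax}$ is sound and strongly complete with respect to the class $\mathcal{F}$ of $\mathsf{CK}$-frames satisfying ($\mathsf{A}$-suff) for each $\mathsf{A}\in\mathsf{Ax}$, i.e. $\Gamma\vdash_{\mathsf{Ax}}\varphi$ iff $\Gamma\Vdash_{\mathcal{F}}\varphi$ for all $\Gamma\subseteq\mathbf{L}$, $\varphi\in\mathbf{L}$; except that for $\mathsf{Ax}=\{\mathsf{N}_\Diamond\}$ and $\mathsf{Ax}=\{\mathsf{N}_\Diamond,\mathsf{C}_\Diamond\}$ the condition ($\mathsf{N}_\Diamond$-corr) is used in place of ($\mathsf{N}_\Diamond$-suff).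
   Context: Formulas: $\mathbf{L}$ is generated from a countably infinite set of propositional variables by $\varphi ::= p \mid \bot \mid \varphi\wedge\varphi \mid \varphi\vee\varphi \mid \varphi\to\varphi \mid \Box\varphi \mid \Diamond\varphi$. Axioms: $\mathsf{K}_\Box$: $\Box(\varphi\to\psi)\to(\Box\varphi\to\Box\psi)$; $\mathsf{K}_\Diamond$: $\Box(\varphi\to\psi)\to(\Diamond\varphi\to\Diamond\psi)$; $\mathsf{N}_\Diamond$: $\Diamond\bot\to\bot$; $\mathsf{C}_\Diamond$: $\Diamond(\varphi\vee\psi)\to\Diamond\varphi\vee\Diamond\psi$; $\mathsf{I}_{\Diamond\Box}$: $(\Diamond\varphi\to\Box\psi)\to\Box(\varphi\to\psi)$. For a set $\mathsf{Ax}$ of axioms, $\mathsf{CK}\oplus\mathsf{Ax}$ is the relation $\Gamma\vdash_{\mathsf{Ax}}\varphi$ inductively generated by: (Ax) $\Gamma\vdash\varphi$ whenever $\varphi$ is a substitution instance of an axiom of a standard Hilbert axiomatisation of intuitionistic propositional logic, of $\mathsf{K}_\Box$, of $\mathsf{K}_\Diamond$, or of an element of $\mathsf{Ax}$; (El) $\Gamma\vdash\varphi$ if $\varphi\in\Gamma$; (MP) from $\Gamma\vdash\varphi$ and $\Gamma\vdash\varphi\to\psi$ infer $\Gamma\vdash\psi$; (Nec) from $\emptyset\vdash\varphi$ infer $\Gamma\vdash\Box\varphi$. A $\mathsf{CK}$-frame is a tuple $(X,e,\le,R)$ where $(X,\le)$ is a preorder, $e\in X$ is a maximal element of $(X,\le)$,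 and $R$ is a binary relation on $X$ with $eRx$ iff $x=e$. A valuation assigns to each variable $p$ an upset $V(p)$ with $e\in V(p)$. Forcing: $x\Vdash p$ iff $x\in V(p)$; $x\Vdash\bot$ iff $x=e$; $\wedge,\vee$ pointwise; $x\Vdash\varphi\to\psi$ iff for all $y\ge x$, $y\Vdash\varphi$ implies $y\Vdash\psi$; $x\Vdash\Box\varphi$ iff for all $y,z$ with $x\le y$ and $yRz$, $z\Vdash\varphi$; $x\Vdash\Diamond\varphi$ iff for all $y\ge x$ there is $z$ with $yRz$ and $z\Vdash\varphi$. For a class $\mathcal{F}$ of frames, $\Gamma\Vdash_{\mathcal{F}}\varphi$ means: for every frame in $\mathcal{F}$, every valuation and every world $x$, if $x$ forces all of $\Gamma$ then $x\Vdash\varphi$. Frame conditions: ($\mathsf{N}_\Diamond$-suff) for all $x$, if $xRe$ then $x=e$. ($\mathsf{N}_\Diamond$-corr) for all $x$, if $yRe$ for all $y\ge x$ then $x=e$. ($\mathsf{C}_\Diamond$-suff) for all $x$ there is $x'\ge x$ such that for all $y,z$, if $x\le y$ and $x'Rz$ then there is $w$ with $yRw$ and $z\le w$. ($\mathsf{I}_{\Diamond\Box}$-suff) for all $x,y,z$ with $xRy$ and $y\le z$ there is $u$ with $x\le u$ and $uRz$ such that for every $s\ge u$ there is $t$ with $sRt$ and $z\le t$. *)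

theory Defs
  imports Main
begin

datatype form =
    Var nat
  | Bot
  | And form form
  | Or form form
  | Imp form form
  | Box form
  | Dia form

datatype ax = N_Dia | C_Dia | I_DiaBox

inductive ipc_axiom :: "form \<Rightarrow> bool" where
  ipc1: "ipc_axiom (Imp p (Imp q p))"
| ipc2: "ipc_axiom (Imp (Imp p (Imp q r)) (Imp (Imp p q) (Imp p r)))"
| ipc3: "ipc_axiom (Imp (And p q) p)"
| ipc4: "ipc_axiom (Imp (And p q) q)"
| ipc5: "ipc_axiom (Imp p (Imp q (And p q)))"
| ipc6: "ipc_axiom (Imp p (Or p q))"
| ipc7: "ipc_axiom (Imp q (Or p q))"
| ipc8: "ipc_axiom (Imp (Imp p r) (Imp (Imp q r) (Imp (Or p q) r)))"
| ipc9: "ipc_axiom (Imp Bot p)"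

inductive ck_axiom :: "form \<Rightarrow> bool" where
  K_Box: "ck_axiom (Imp (Box (Imp p q)) (Imp (Box p) (Box q)))"
| K_Dia: "ck_axiom (Imp (Box (Imp p q)) (Imp (Dia p) (Dia q)))"

inductive extra_axiom :: "ax \<Rightarrow> form \<Rightarrow> bool" where
  N_ax: "extra_axiom N_Dia (Imp (Dia Bot) Bot)"
| C_ax: "extra_axiom C_Dia (Imp (Dia (Or p q)) (Or (Dia p) (Dia q)))"
| I_ax: "extra_axiom I_DiaBox (Imp (Imp (Dia p) (Box q)) (Box (Imp p q)))"

inductive derivable :: "ax set \<Rightarrow> form set \<Rightarrow> form \<Rightarrow> bool" where
  Ax_ipc: "ipc_axiom \<phi> \<Longrightarrow> derivable Ax \<Gamma> \<phi>"
| Ax_ck: "ck_axiom \<phi> \<Longrightarrow> derivable Ax \<Gamma> \<phi>"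
| Ax_extra: "A \<in> Ax \<Longrightarrow> extra_axiom A \<phi> \<Longrightarrow> derivable Ax \<Gamma> \<phi>"
| El: "\<phi> \<in> \<Gamma> \<Longrightarrow> derivable Ax \<Gamma> \<phi>"
| MP: "derivable Ax \<Gamma> \<phi> \<Longrightarrow> derivable Ax \<Gamma> (Imp \<phi> \<psi>) \<Longrightarrow> derivable Ax \<Gamma> \<psi>"
| Nec: "derivable Ax {} \<phi> \<Longrightarrow> derivable Ax \<Gamma> (Box \<phi>)"

text \<open>A CK-frame (X, e, le, R): carrier X, fallible world e.\<close>
definition CK_frame :: "'w set \<Rightarrow> 'w \<Rightarrow> ('w \<Rightarrow> 'w \<Rightarrow> bool) \<Rightarrow> ('w \<Rightarrow> 'w \<Rightarrow> bool) \<Rightarrow> bool" where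
  "CK_frame X e le R \<longleftrightarrow>
     e \<in> X
   \<and> (\<forall>x y. le x y \<longrightarrow> x \<in> X \<and> y \<in> X)
   \<and> (\<forall>x y. R x y \<longrightarrow> x \<in> X \<and> y \<in> X)
   \<and> (\<forall>x\<in>X. le x x)
   \<and> (\<forall>x y z. le x y \<longrightarrow> le y z \<longrightarrow> le x z)
   \<and> (\<forall>x\<in>X. le e x \<longrightarrow> x = e)
   \<and> (\<forall>x\<in>X. R e x \<longleftrightarrow> x = e)"

definition valuation :: "'w set \<Rightarrow> 'w \<Rightarrow> ('w \<Rightarrow> 'w \<Rightarrow> bool) \<Rightarrow> (nat \<Rightarrow> 'w set) \<Rightarrow> bool" where
  "valuation X e le V \<longleftrightarrow>
     (\<forall>p. V p \<subseteq> X \<and> e \<in> V p \<and> (\<forall>x y. x \<in> V p \<longrightarrow> le x y \<longrightarrow> y \<in> V p))"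

fun forces :: "'w set \<Rightarrow> 'w \<Rightarrow> ('w \<Rightarrow> 'w \<Rightarrow> bool) \<Rightarrow> ('w \<Rightarrow> 'w \<Rightarrow> bool) \<Rightarrow> (nat \<Rightarrow> 'w set)
                 \<Rightarrow> 'w \<Rightarrow> form \<Rightarrow> bool" where
  "forces X e le R V x (Var p) \<longleftrightarrow> x \<in> V p"
| "forces X e le R V x Bot \<longleftrightarrow> x = e"
| "forces X e le R V x (And \<phi> \<psi>) \<longleftrightarrow> forces X e le R V x \<phi> \<and> forces X e le R V x \<psi>"
| "forces X e le R V x (Or \<phi> \<psi>) \<longleftrightarrow> forces X e le R V x \<phi> \<or> forces X e le R V x \<psi>"
| "forces X e le R V x (Imp \<phi> \<psi>) \<longleftrightarrow>
     (\<forall>y\<in>X. le x y \<longrightarrow> forces X e le R V y \<phi> \<longrightarrow> forces X e le R V y \<psi>)"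
| "forces X e le R V x (Box \<phi>) \<longleftrightarrow>
     (\<forall>y\<in>X. \<forall>z\<in>X. le x y \<longrightarrow> R y z \<longrightarrow> forces X e le R V z \<phi>)"
| "forces X e le R V x (Dia \<phi>) \<longleftrightarrow>
     (\<forall>y\<in>X. le x y \<longrightarrow> (\<exists>z\<in>X. R y z \<and> forces X e le R V z \<phi>))"

definition N_suff :: "'w set \<Rightarrow> 'w \<Rightarrow> ('w \<Rightarrow> 'w \<Rightarrow> bool) \<Rightarrow> ('w \<Rightarrow> 'w \<Rightarrow> bool) \<Rightarrow> bool" where
  "N_suff X e le R \<longleftrightarrow> (\<forall>x\<in>X. R x e \<longrightarrow> x = e)"

definition N_corr :: "'w set \<Rightarrow> 'w \<Rightarrow> ('w \<Rightarrow> 'w \<Rightarrow> bool) \<Rightarrow> ('w \<Rightarrow> 'w \<Rightarrow> bool) \<Rightarrow> bool" where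
  "N_corr X e le R \<longleftrightarrow> (\<forall>x\<in>X. (\<forall>y\<in>X. le x y \<longrightarrow> R y e) \<longrightarrow> x = e)"

definition C_suff :: "'w set \<Rightarrow> 'w \<Rightarrow> ('w \<Rightarrow> 'w \<Rightarrow> bool) \<Rightarrow> ('w \<Rightarrow> 'w \<Rightarrow> bool) \<Rightarrow> bool" where
  "C_suff X e le R \<longleftrightarrow>
     (\<forall>x\<in>X. \<exists>x'\<in>X. le x x' \<and>
        (\<forall>y\<in>X. \<forall>z\<in>X. le x y \<longrightarrow> R x' z \<longrightarrow> (\<exists>w\<in>X. R y w \<and> le z w)))"

definition I_suff :: "'w set \<Rightarrow> 'w \<Rightarrow> ('w \<Rightarrow> 'w \<Rightarrow> bool) \<Rightarrow> ('w \<Rightarrow> 'w \<Rightarrow> bool) \<Rightarrow> bool" where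
  "I_suff X e le R \<longleftrightarrow>
     (\<forall>x\<in>X. \<forall>y\<in>X. \<forall>z\<in>X. R x y \<longrightarrow> le y z \<longrightarrow>
        (\<exists>u\<in>X. le x u \<and> R u z \<and> (\<forall>s\<in>X. le u s \<longrightarrow> (\<exists>t\<in>X. R s t \<and> le z t))))"

definition frame_class :: "ax set \<Rightarrow> 'w set \<Rightarrow> 'w \<Rightarrow> ('w \<Rightarrow> 'w \<Rightarrow> bool) \<Rightarrow> ('w \<Rightarrow> 'w \<Rightarrow> bool) \<Rightarrow> bool" where
  "frame_class Ax X e le R \<longleftrightarrow>
     CK_frame X e le R
   \<and> (N_Dia \<in> Ax \<longrightarrow>
        (if Ax = {N_Dia} \<or> Ax = {N_Dia, C_Dia} then N_corr X e le R else N_suff X e le R))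
   \<and> (C_Dia \<in> Ax \<longrightarrow> C_suff X e le R)
   \<and> (I_DiaBox \<in> Ax \<longrightarrow> I_suff X e le R)"

definition sem_conseq :: "'w itself \<Rightarrow> ax set \<Rightarrow> form set \<Rightarrow> form \<Rightarrow> bool" where
  "sem_conseq (TYPE('w)) Ax \<Gamma> \<phi> \<longleftrightarrow>
     (\<forall>(X::'w set) e le R V x.
        frame_class Ax X e le R \<longrightarrow> valuation X e le V \<longrightarrow> x \<in> X \<longrightarrow>
        (\<forall>\<gamma>\<in>\<Gamma>. forces X e le R V x \<gamma>) \<longrightarrow> forces X e le R V x \<phi>)"

end

theory Submission
  imports Defs
begin


lemma der_mono: "derivable A G p \<Longrightarrow> G \<subseteq> H \<Longrightarrow> derivable A H p"
  by (induction rule: derivable.induct) (auto intro: derivable.intros)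

lemma ax1: "derivable A G (Imp p (Imp q p))" by (rule Ax_ipc, rule ipc1)
lemma ax2: "derivable A G (Imp (Imp p (Imp q r)) (Imp (Imp p q) (Imp p r)))" by (rule Ax_ipc, rule ipc2)
lemma ax3: "derivable A G (Imp (And p q) p)" by (rule Ax_ipc, rule ipc3)
lemma ax4: "derivable A G (Imp (And p q) q)" by (rule Ax_ipc, rule ipc4)
lemma ax5: "derivable A G (Imp p (Imp q (And p q)))" by (rule Ax_ipc, rule ipc5)
lemma ax6: "derivable A G (Imp p (Or p q))" by (rule Ax_ipc, rule ipc6)
lemma ax7: "derivable A G (Imp q (Or p q))" by (rule Ax_ipc, rule ipc7)
lemma ax8: "derivable A G (Imp (Imp p r) (Imp (Imp q r) (Imp (Or p q) r)))" by (rule Ax_ipc, rule ipc8)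
lemma ax9: "derivable A G (Imp Bot p)" by (rule Ax_ipc, rule ipc9)
lemma kbox: "derivable A G (Imp (Box (Imp p q)) (Imp (Box p) (Box q)))" by (rule Ax_ck, rule K_Box)
lemma kdia: "derivable A G (Imp (Box (Imp p q)) (Imp (Dia p) (Dia q)))" by (rule Ax_ck, rule K_Dia)

lemma mp2: "derivable A G (Imp p (Imp q r)) \<Longrightarrow> derivable A G p \<Longrightarrow> derivable A G q \<Longrightarrow> derivable A G r"
  by (meson MP)

lemma der_id: "derivable A G (Imp p p)"
  by (rule MP[OF ax1[of _ _ p "Imp p p"] MP[OF ax1 ax2]])

lemma deduction0: "derivable A G' q \<Longrightarrow> G' = insert p G \<Longrightarrow> derivable A G (Imp p q)"
proof (induction rule: derivable.induct)
  case (Ax_ipc \<phi> Ax \<Gamma>) then show ?case by (meson MP ax1 derivable.Ax_ipc)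
next
  case (Ax_ck \<phi> Ax \<Gamma>) then show ?case by (meson MP ax1 derivable.Ax_ck)
next
  case (Ax_extra A Ax \<phi> \<Gamma>) then show ?case by (meson MP ax1 derivable.Ax_extra)
next
  case (El \<phi> \<Gamma> Ax) then show ?case by (metis MP ax1 der_id derivable.El insert_iff)
next
  case (MP Ax \<Gamma> \<phi> \<psi>) then show ?case by (meson ax2 derivable.MP)
next
  case (Nec Ax \<phi> \<Gamma>) then show ?case by (meson ax1 derivable.MP derivable.Nec)
qed

lemma deduction: "derivable A (insert p G) q \<Longrightarrow> derivable A G (Imp p q)"
  using deduction0 by blast

lemma undeduction: "derivable A G (Imp p q) \<Longrightarrow> derivable A (insert p G) q"
  by (meson El MP der_mono insertI1 subset_insertI)

lemma der_compact: "derivable A G p \<Longrightarrow> \<exists>F. finite F \<and> F \<subseteq> G \<and> derivable A F p"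
proof (induction rule: derivable.induct)
  case (MP Ax \<Gamma> \<phi> \<psi>)
  then obtain F1 F2 where "finite F1" "F1 \<subseteq> \<Gamma>" "derivable Ax F1 \<phi>" "finite F2" "F2 \<subseteq> \<Gamma>" "derivable Ax F2 (Imp \<phi> \<psi>)" by blast
  then show ?case
    by (intro exI[of _ "F1 \<union> F2"]) (meson derivable.MP der_mono finite_UnI le_supI sup_ge1 sup_ge2)
qed (auto intro: derivable.intros)

lemma cut1: "derivable A (insert x B) y \<Longrightarrow> derivable A (insert z B) x \<Longrightarrow> derivable A (insert z B) y"
  by (meson MP deduction der_mono subset_insertI)

lemma or_elim: "derivable A G (Or p q) \<Longrightarrow> derivable A (insert p G) r \<Longrightarrow> derivable A (insert q G) r \<Longrightarrow> derivable A G r"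
  by (meson MP ax8 deduction)

lemma and_intro: "derivable A G p \<Longrightarrow> derivable A G q \<Longrightarrow> derivable A G (And p q)"
  using ax5 mp2 by blast

lemma box_mono: "derivable A {} (Imp p q) \<Longrightarrow> derivable A G (Imp (Box p) (Box q))"
  by (meson MP Nec kbox)

lemma dia_mono: "derivable A {} (Imp p q) \<Longrightarrow> derivable A G (Imp (Dia p) (Dia q))"
  by (meson MP Nec kdia)



definition thy :: "ax set \<Rightarrow> form set \<Rightarrow> bool" where
  "thy A G \<longleftrightarrow> (\<forall>p. derivable A G p \<longrightarrow> p \<in> G)"
definition prime :: "form set \<Rightarrow> bool" where
  "prime G \<longleftrightarrow> (\<forall>p q. Or p q \<in> G \<longrightarrow> p \<in> G \<or> q \<in> G)"
definition dir :: "ax set \<Rightarrow> form set \<Rightarrow> bool" where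
  "dir A P \<longleftrightarrow> (\<forall>a\<in>P. \<forall>b\<in>P. \<exists>c\<in>P. derivable A {} (Imp (Or a b) c))"


lemma lindenbaum:
  assumes d: "dir A P" and s: "\<forall>\<pi>\<in>P. \<not> derivable A S \<pi>"
  shows "\<exists>T. S \<subseteq> T \<and> thy A T \<and> prime T \<and> (\<forall>\<pi>\<in>P. \<not> derivable A T \<pi>)"
proof -
  define \<A> where "\<A> = {T. S \<subseteq> T \<and> (\<forall>\<pi>\<in>P. \<not> derivable A T \<pi>)}"
  have "\<exists>M\<in>\<A>. \<forall>X\<in>\<A>. M \<subseteq> X \<longrightarrow> X = M"
  proof (rule Zorn_Lemma2, intro ballI)
    fix C assume C: "C \<in> chains \<A>"
    show "\<exists>U\<in>\<A>. \<forall>X\<in>C. X \<subseteq> U"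
    proof (cases "C = {}")
      case True then show ?thesis using s by (auto simp: \<A>_def)
    next
      case False
      have sub: "subset.chain \<A> C" using C by (simp add: chains_alt_def)
      have CA: "C \<subseteq> \<A>" using C by (auto simp: chains_def)
      have "\<Union>C \<in> \<A>"
      proof -
        have "S \<subseteq> \<Union>C" using False CA by (auto simp: \<A>_def)
        moreover have "\<not> derivable A (\<Union>C) \<pi>" if "\<pi> \<in> P" for \<pi>
        proof
          assume "derivable A (\<Union>C) \<pi>"
          from der_compact[OF this] obtain F where F: "finite F" "F \<subseteq> \<Union>C" "derivable A F \<pi>" by blast
          then obtain B where "B \<in> C" "F \<subseteq> B" using finite_subset_Union_chain[OF F(1) F(2) False sub] by blast
          then have "derivable A B \<pi>" using F der_mono by blast
          then show False using \<open>B \<in> C\<close> CA that by (auto simp: \<A>_def)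
        qed
        ultimately show ?thesis by (auto simp: \<A>_def)
      qed
      then show ?thesis by blast
    qed
  qed
  then obtain M where M: "M \<in> \<A>" and max: "\<And>X. X \<in> \<A> \<Longrightarrow> M \<subseteq> X \<Longrightarrow> X = M" by blast
  have ins: "insert p M \<in> \<A>" if "derivable A M p" for p
  proof -
    have "\<not> derivable A (insert p M) \<pi>" if "\<pi> \<in> P" for \<pi>
    proof
      assume "derivable A (insert p M) \<pi>"
      then have "derivable A M \<pi>" using MP[OF \<open>derivable A M p\<close> deduction] by blast
      then show False using M that by (auto simp: \<A>_def)
    qed
    then show ?thesis using M by (auto simp: \<A>_def)
  qed
  have th: "thy A M"
    unfolding thy_def using ins max by blast
  have pr: "prime M"
    unfolding prime_def
  proof (intro allI impI)
    fix p q assume o: "Or p q \<in> M"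
    show "p \<in> M \<or> q \<in> M"
    proof (rule ccontr)
      assume n: "\<not> (p \<in> M \<or> q \<in> M)"
      have "insert p M \<notin> \<A>" using max[of "insert p M"] n by blast
      then obtain \<pi>1 where p1: "\<pi>1 \<in> P" "derivable A (insert p M) \<pi>1" using M by (auto simp: \<A>_def)
      have "insert q M \<notin> \<A>" using max[of "insert q M"] n by blast
      then obtain \<pi>2 where p2: "\<pi>2 \<in> P" "derivable A (insert q M) \<pi>2" using M by (auto simp: \<A>_def)
      obtain c where c: "c \<in> P" "derivable A {} (Imp (Or \<pi>1 \<pi>2) c)" using d p1 p2 by (meson dir_def)
      have "derivable A (insert p M) (Or \<pi>1 \<pi>2)" using MP[OF p1(2) ax6] .
      moreover have "derivable A (insert q M) (Or \<pi>1 \<pi>2)" using MP[OF p2(2) ax7] .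
      ultimately have "derivable A M (Or \<pi>1 \<pi>2)"
        using or_elim[OF El[OF o]] by blast
      moreover have "derivable A M (Imp (Or \<pi>1 \<pi>2) c)" using c(2) der_mono by blast
      ultimately have "derivable A M c" by (rule MP)
      then show False using c M by (auto simp: \<A>_def)
    qed
  qed
  show ?thesis using M th pr by (auto simp: \<A>_def)
qed


lemma thy_mem: "thy A G \<Longrightarrow> derivable A G p \<Longrightarrow> p \<in> G"
  by (simp add: thy_def)

lemma box_closure_fin:
  "finite F \<Longrightarrow> thy A G \<Longrightarrow> (\<forall>f\<in>F. Box f \<in> G) \<Longrightarrow> derivable A F c \<Longrightarrow> Box c \<in> G"
proof (induction F arbitrary: c rule: finite_induct)
  case empty
  then show ?case using Nec[of A c G] thy_mem[of A G] by blast
next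
  case (insert x F)
  then have "Box (Imp x c) \<in> G" using deduction[of A x F c] by blast
  moreover have "Box x \<in> G" using insert by blast
  ultimately have "derivable A G (Box c)" using MP[OF El MP[OF El kbox]] by blast
  then show ?case using insert(4) thy_mem by blast
qed

lemma box_closure: "thy A G \<Longrightarrow> derivable A {f. Box f \<in> G} c \<Longrightarrow> Box c \<in> G"
proof -
  assume "thy A G" "derivable A {f. Box f \<in> G} c"
  from der_compact[OF this(2)] obtain F where "finite F" "F \<subseteq> {f. Box f \<in> G}" "derivable A F c" by blast
  then show ?thesis using box_closure_fin[of F A G c] \<open>thy A G\<close> by blast
qed


lemma fold_fin:
  assumes "thy A S" and m: "\<And>a b. derivable A {} (Imp (m (And a b)) (m a))" "\<And>a b. derivable A {} (Imp (m (And a b)) (m b))"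
  shows "finite F \<Longrightarrow> F \<subseteq> m ` S \<Longrightarrow> derivable A (F \<union> B) p \<Longrightarrow> \<exists>s\<in>S. derivable A (insert (m s) B) p"
proof (induction F arbitrary: p rule: finite_induct)
  case empty
  have "Imp Bot Bot \<in> S" using assms(1) ax9 thy_mem by blast
  have "derivable A B p" using empty by simp
  then show ?case using \<open>Imp Bot Bot \<in> S\<close> der_mono[of A B p] by blast
next
  case (insert x F)
  obtain d where d: "d \<in> S" "x = m d" using insert by auto
  have "derivable A (F \<union> B) (Imp x p)" using insert(5) by (intro deduction) (simp)
  then obtain s where s: "s \<in> S" "derivable A (insert (m s) B) (Imp x p)" using insert by auto
  have sd: "And s d \<in> S" using assms(1) s(1) d(1) and_intro[OF El El] thy_mem by blast
  have 1: "derivable A (insert (m (And s d)) B) (m s)"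
    using MP[OF El der_mono[OF m(1)]] by blast
  have 2: "derivable A (insert (m (And s d)) B) x"
    unfolding d(2) using MP[OF El der_mono[OF m(2)]] by blast
  have 3: "derivable A (insert (m (And s d)) B) (Imp x p)"
    using cut1[OF s(2) 1] .
  have "derivable A (insert (m (And s d)) B) p"
    using MP[OF 2 3] .
  then show ?case using sd by blast
qed

lemma fold:
  assumes "thy A S" and m: "\<And>a b. derivable A {} (Imp (m (And a b)) (m a))" "\<And>a b. derivable A {} (Imp (m (And a b)) (m b))"
    and "derivable A (m ` S \<union> B) p"
  shows "\<exists>s\<in>S. derivable A (insert (m s) B) p"
proof -
  from der_compact[OF assms(4)] obtain F where F: "finite F" "F \<subseteq> m ` S \<union> B" "derivable A F p" by blast
  have "F \<subseteq> (F \<inter> m ` S) \<union> B" using F(2) by blast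
  then have "derivable A ((F \<inter> m ` S) \<union> B) p" using F(3) der_mono by blast
  then show ?thesis using fold_fin[OF assms(1) m, of "F \<inter> m ` S"] F(1) by blast
qed



context
  fixes X :: "'w set" and e le R V
  assumes F: "CK_frame X e le R" and Val: "valuation X e le V"
begin

lemma leX: "le x y \<Longrightarrow> x \<in> X \<and> y \<in> X" using F by (simp add: CK_frame_def)
lemma RX: "R x y \<Longrightarrow> x \<in> X \<and> y \<in> X" using F by (simp add: CK_frame_def)
lemma ckrefl: "x \<in> X \<Longrightarrow> le x x" using F by (simp add: CK_frame_def)
lemma cktrans: "le x y \<Longrightarrow> le y z \<Longrightarrow> le x z"
proof -
  have "\<forall>x y z. le x y \<longrightarrow> le y z \<longrightarrow> le x z" using F by (simp add: CK_frame_def)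
  then show "le x y \<Longrightarrow> le y z \<Longrightarrow> le x z" by blast
qed
lemma emax: "le e y \<Longrightarrow> y = e"
proof -
  have "\<forall>x\<in>X. le e x \<longrightarrow> x = e" using F by (simp add: CK_frame_def)
  then show "le e y \<Longrightarrow> y = e" using leX by blast
qed
lemma eR: "R e z \<Longrightarrow> z = e"
proof -
  have "\<forall>x\<in>X. R e x \<longleftrightarrow> x = e" using F by (simp add: CK_frame_def)
  then show "R e z \<Longrightarrow> z = e" using RX by blast
qed
lemma eX: "e \<in> X" using F by (simp add: CK_frame_def)
lemma eRe: "R e e"
proof -
  have "\<forall>x\<in>X. R e x \<longleftrightarrow> x = e" using F by (simp add: CK_frame_def)
  then show ?thesis using eX by blast
qed

lemma persist: "forces X e le R V x p \<Longrightarrow> le x y \<Longrightarrow> forces X e le R V y p"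
proof (induction p arbitrary: x y)
  case (Var n) then show ?case using Val by (auto simp: valuation_def)
next
  case Bot then show ?case using emax by auto
next
  case (Imp p1 p2) then show ?case by simp (meson cktrans)
next
  case (Box p) then show ?case by simp (meson cktrans)
next
  case (Dia p) then show ?case by simp (meson cktrans)
qed auto

lemma e_forces: "forces X e le R V e p"
proof (induction p)
  case (Var n) then show ?case using Val by (auto simp: valuation_def)
next
  case (Imp p1 p2) then show ?case using emax by auto
next
  case (Box p) then show ?case using emax eR by auto
next
  case (Dia p) then show ?case using emax eRe eX by auto
qed auto

lemma ipc_sound: "ipc_axiom p \<Longrightarrow> x \<in> X \<Longrightarrow> forces X e le R V x p"
proof (induction rule: ipc_axiom.induct)
  case (ipc1 p q) then show ?case using persist by auto
next
  case (ipc2 p q r)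
  show ?case
  proof (simp, intro ballI impI)
    fix y z w assume "y \<in> X" "z \<in> X" "w \<in> X" "le x y" "le y z" "le z w"
      and a: "\<forall>y'\<in>X. le y y' \<longrightarrow> forces X e le R V y' p \<longrightarrow> (\<forall>ya\<in>X. le y' ya \<longrightarrow> forces X e le R V ya q \<longrightarrow> forces X e le R V ya r)"
      and b: "\<forall>y\<in>X. le z y \<longrightarrow> forces X e le R V y p \<longrightarrow> forces X e le R V y q"
      and c: "forces X e le R V w p"
    have "le y w" using cktrans \<open>le y z\<close> \<open>le z w\<close> by blast
    moreover have "forces X e le R V w q" using b c \<open>w \<in> X\<close> \<open>le z w\<close> by blast
    ultimately show "forces X e le R V w r" using a c \<open>w \<in> X\<close> ckrefl by blast
  qed
next
  case (ipc8 p r q)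
  then show ?case using cktrans ckrefl by (simp; meson cktrans ckrefl)
qed (auto simp: e_forces intro: persist)

lemma ck_sound: "ck_axiom p \<Longrightarrow> x \<in> X \<Longrightarrow> forces X e le R V x p"
proof (induction rule: ck_axiom.induct)
  case (K_Box p q) then show ?case using cktrans ckrefl RX by (simp; meson cktrans ckrefl RX)
next
  case (K_Dia p q)
  show ?case
  proof (simp, intro ballI impI)
    fix y z w assume "y \<in> X" "z \<in> X" "w \<in> X" "le x y" "le y z" "le z w"
      and a: "\<forall>ya\<in>X. le y ya \<longrightarrow> (\<forall>z\<in>X. R ya z \<longrightarrow> (\<forall>y\<in>X. le z y \<longrightarrow> forces X e le R V y p \<longrightarrow> forces X e le R V y q))"
      and b: "\<forall>y\<in>X. le z y \<longrightarrow> (\<exists>z\<in>X. R y z \<and> forces X e le R V z p)"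
    obtain u where u: "u \<in> X" "R w u" "forces X e le R V u p" using b \<open>w \<in> X\<close> \<open>le z w\<close> by blast
    have "le y w" using cktrans \<open>le y z\<close> \<open>le z w\<close> by blast
    then have "forces X e le R V u q" using a u \<open>w \<in> X\<close> ckrefl by blast
    then show "\<exists>z\<in>X. R w z \<and> forces X e le R V z q" using u by blast
  qed
qed

end

lemma N_suff_corr: "CK_frame X e le R \<Longrightarrow> N_suff X e le R \<Longrightarrow> N_corr X e le R"
proof -
  assume a: "CK_frame X e le R" "N_suff X e le R"
  have "\<forall>x\<in>X. le x x" using a(1) by (simp add: CK_frame_def)
  then show ?thesis using a(2) unfolding N_suff_def N_corr_def by blast
qed

lemma extra_sound:
  assumes F: "frame_class Ax X e le R" and Val: "valuation X e le V" and "A \<in> Ax" "extra_axiom A p" "x \<in> X"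
  shows "forces X e le R V x p"
  using assms(4,3,5)
proof (induction rule: extra_axiom.induct)
  have ck: "CK_frame X e le R" using F by (simp add: frame_class_def)
  case N_ax
  then have "N_corr X e le R" using F N_suff_corr[OF ck] by (auto simp: frame_class_def split: if_splits)
  then show ?case unfolding N_corr_def by (auto intro: leX[OF ck Val])
next
  have ck: "CK_frame X e le R" using F by (simp add: frame_class_def)
  case (C_ax p q)
  then have C: "C_suff X e le R" using F by (auto simp: frame_class_def)
  show ?case
  proof (simp, intro ballI impI)
    fix y assume y: "y \<in> X" "le x y" and a: "\<forall>ya\<in>X. le y ya \<longrightarrow> (\<exists>z\<in>X. R ya z \<and> (forces X e le R V z p \<or> forces X e le R V z q))"
    obtain y' where y': "y' \<in> X" "le y y'" "\<forall>u\<in>X. \<forall>z\<in>X. le y u \<longrightarrow> R y' z \<longrightarrow> (\<exists>w\<in>X. R u w \<and> le z w)"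
      using C y unfolding C_suff_def by blast
    obtain z where z: "z \<in> X" "R y' z" "forces X e le R V z p \<or> forces X e le R V z q" using a y' by blast
    have "\<forall>u\<in>X. le y u \<longrightarrow> (\<exists>w\<in>X. R u w \<and> forces X e le R V w p)" if "forces X e le R V z p"
      using y' z that persist[OF ck Val] by meson
    moreover have "\<forall>u\<in>X. le y u \<longrightarrow> (\<exists>w\<in>X. R u w \<and> forces X e le R V w q)" if "forces X e le R V z q"
      using y' z that persist[OF ck Val] by meson
    ultimately show "(\<forall>ya\<in>X. le y ya \<longrightarrow> (\<exists>z\<in>X. R ya z \<and> forces X e le R V z p)) \<or>
           (\<forall>ya\<in>X. le y ya \<longrightarrow> (\<exists>z\<in>X. R ya z \<and> forces X e le R V z q))" using z by blast
  qed
next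
  have ck: "CK_frame X e le R" using F by (simp add: frame_class_def)
  case (I_ax p q)
  then have I: "I_suff X e le R" using F by (auto simp: frame_class_def)
  have main: "forces X e le R V w q"
    if X: "y \<in> X" "u \<in> X" "v \<in> X" "w \<in> X" and le: "le x y" "le y u" "R u v" "le v w"
      and a: "forces X e le R V y (Imp (Dia p) (Box q))"
      and b: "forces X e le R V w p" for y u v w
  proof -
    obtain s where s: "s \<in> X" "le u s" "R s w" "\<forall>s'\<in>X. le s s' \<longrightarrow> (\<exists>t\<in>X. R s' t \<and> le w t)"
      using I X le unfolding I_suff_def by blast
    have "le y s" using cktrans[OF ck Val] le s by blast
    moreover have "\<forall>s'\<in>X. le s s' \<longrightarrow> (\<exists>z\<in>X. R s' z \<and> forces X e le R V z p)"
      using s b persist[OF ck Val] by meson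
    ultimately have "forces X e le R V s (Box q)" using a s by simp
    then show "forces X e le R V w q" using s X ckrefl[OF ck Val] by auto
  qed
  show ?case
  proof (subst forces.simps, intro ballI impI)
    fix y assume y: "y \<in> X" "le x y" "forces X e le R V y (Imp (Dia p) (Box q))"
    show "forces X e le R V y (Box (Imp p q))"
    proof (subst forces.simps, intro ballI impI)
      fix u v assume uv: "u \<in> X" "v \<in> X" "le y u" "R u v"
      show "forces X e le R V v (Imp p q)"
      proof (subst forces.simps, intro ballI impI)
        fix w assume w: "w \<in> X" "le v w" "forces X e le R V w p"
        show "forces X e le R V w q" using main[OF y(1) uv(1,2) w(1) y(2) uv(3,4) w(2) y(3) w(3)] .
      qed
    qed
  qed
qed

lemma fc_ck: "frame_class Ax X e le R \<Longrightarrow> CK_frame X e le R" by (simp add: frame_class_def)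

theorem soundness:
  "derivable Ax \<Gamma> \<phi> \<Longrightarrow> sem_conseq TYPE('v) Ax \<Gamma> \<phi>"
  unfolding sem_conseq_def
proof (induction rule: derivable.induct)
  case (Ax_ipc \<phi> Ax \<Gamma>)
  show ?case
  proof (intro allI impI)
    fix X :: "'v set" and e le R V x
    assume h: "frame_class Ax X e le R" "valuation X e le V" "x \<in> X"
    show "forces X e le R V x \<phi>" by (rule ipc_sound[OF fc_ck[OF h(1)] h(2) Ax_ipc.hyps h(3)])
  qed
next
  case (Ax_ck \<phi> Ax \<Gamma>)
  show ?case
  proof (intro allI impI)
    fix X :: "'v set" and e le R V x
    assume h: "frame_class Ax X e le R" "valuation X e le V" "x \<in> X"
    show "forces X e le R V x \<phi>" by (rule ck_sound[OF fc_ck[OF h(1)] h(2) Ax_ck.hyps h(3)])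
  qed
next
  case (Ax_extra A Ax \<phi> \<Gamma>)
  show ?case
  proof (intro allI impI)
    fix X :: "'v set" and e le R V x
    assume h: "frame_class Ax X e le R" "valuation X e le V" "x \<in> X"
    show "forces X e le R V x \<phi>" by (rule extra_sound[OF h(1) h(2) Ax_extra.hyps h(3)])
  qed
next
  case (El \<phi> \<Gamma> Ax) then show ?case by blast
next
  case (MP Ax \<Gamma> \<phi> \<psi>)
  show ?case
  proof (intro allI impI)
    fix X :: "'v set" and e le R V x
    assume h: "frame_class Ax X e le R" "valuation X e le V" "x \<in> X" "\<forall>\<gamma>\<in>\<Gamma>. forces X e le R V x \<gamma>"
    have "forces X e le R V x \<phi>" "forces X e le R V x (Imp \<phi> \<psi>)" using MP.IH h by blast+
    moreover have "le x x" using ckrefl[OF fc_ck[OF h(1)] h(2) h(3)] .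
    ultimately show "forces X e le R V x \<psi>" using h(3) by simp
  qed
next
  case (Nec Ax \<phi> \<Gamma>)
  show ?case
  proof (intro allI impI)
    fix X :: "'v set" and e le R V x
    assume h: "frame_class Ax X e le R" "valuation X e le V" "x \<in> X"
    show "forces X e le R V x (Box \<phi>)" using Nec.IH h by auto
  qed
qed



definition W :: "ax set \<Rightarrow> form set \<times> form set \<Rightarrow> bool" where
  "W A w \<longleftrightarrow> thy A (fst w) \<and> prime (fst w) \<and> (\<forall>\<psi>\<in>snd w. Dia \<psi> \<notin> fst w) \<and> dir A (snd w)"
definition cX :: "ax set \<Rightarrow> (form set \<times> form set) set" where "cX A = {w. W A w}"
definition ce :: "form set \<times> form set" where "ce = (UNIV, {})"
definition cle :: "ax set \<Rightarrow> form set \<times> form set \<Rightarrow> form set \<times> form set \<Rightarrow> bool" where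
  "cle A x y \<longleftrightarrow> W A x \<and> W A y \<and> fst x \<subseteq> fst y"
definition cR :: "ax set \<Rightarrow> form set \<times> form set \<Rightarrow> form set \<times> form set \<Rightarrow> bool" where
  "cR A x y \<longleftrightarrow> W A x \<and> W A y \<and> {f. Box f \<in> fst x} \<subseteq> fst y \<and> fst y \<inter> snd x = {}
     \<and> (Bot \<in> fst y \<longrightarrow> Dia Bot \<in> fst x)"
definition cV :: "ax set \<Rightarrow> nat \<Rightarrow> (form set \<times> form set) set" where
  "cV A n = {w. W A w \<and> Var n \<in> fst w}"

lemma thy_UNIV: "thy A UNIV" by (simp add: thy_def)
lemma dir_empty: "dir A {}" by (simp add: dir_def)
lemma W_e: "W A ce" by (simp add: W_def ce_def thy_UNIV prime_def dir_empty)

lemma thy_MP: "thy A G \<Longrightarrow> Imp a b \<in> G \<Longrightarrow> a \<in> G \<Longrightarrow> b \<in> G"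
  by (meson El MP thy_mem)
lemma thy_der: "thy A G \<Longrightarrow> derivable A {} p \<Longrightarrow> p \<in> G"
  using der_mono thy_mem by blast

lemma thy_bot: "thy A G \<Longrightarrow> Bot \<in> G \<Longrightarrow> G = UNIV"
  using thy_MP[OF _ thy_der[OF _ ax9]] by blast

lemma dia_bot_all: "thy A G \<Longrightarrow> Dia Bot \<in> G \<Longrightarrow> Dia p \<in> G"
  using thy_MP[OF _ thy_der[OF _ dia_mono[OF ax9]]] by blast

lemma W_diabot: "W A w \<Longrightarrow> Dia Bot \<in> fst w \<Longrightarrow> snd w = {}"
  unfolding W_def using dia_bot_all by blast

lemma W_univ: "W A w \<Longrightarrow> fst w = UNIV \<Longrightarrow> w = ce"
  using W_diabot[of A w] unfolding ce_def by (metis UNIV_I prod.collapse)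

lemma or_imp: "derivable A {} (Imp a c) \<Longrightarrow> derivable A {} (Imp b c) \<Longrightarrow> derivable A {} (Imp (Or a b) c)"
  using MP[OF _ MP[OF _ ax8]] by blast

lemma dir_single: "dir A {a}"
  unfolding dir_def using or_imp[OF der_id der_id] by blast

lemma dir_insert_bot: "dir A P \<Longrightarrow> dir A (insert Bot P)"
  unfolding dir_def
proof (intro ballI)
  fix a b assume d: "\<forall>a\<in>P. \<forall>b\<in>P. \<exists>c\<in>P. derivable A {} (Imp (Or a b) c)" and ab: "a \<in> insert Bot P" "b \<in> insert Bot P"
  show "\<exists>c\<in>insert Bot P. derivable A {} (Imp (Or a b) c)"
  proof (cases "a = Bot")
    case True
    then show ?thesis using ab(2) or_imp[OF ax9 der_id] by blast
  next
    case False
    then have a: "a \<in> P" using ab by blast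
    show ?thesis
    proof (cases "b = Bot")
      case True
      then show ?thesis using a or_imp[OF der_id ax9] by blast
    next
      case False
      then show ?thesis using a ab d by blast
    qed
  qed
qed

lemma thy_and: "thy A G \<Longrightarrow> And a b \<in> G \<longleftrightarrow> a \<in> G \<and> b \<in> G"
  using thy_MP[OF _ thy_der[OF _ ax3]] thy_MP[OF _ thy_der[OF _ ax4]] and_intro[OF El El] thy_mem by blast

lemma thy_or: "thy A G \<Longrightarrow> prime G \<Longrightarrow> Or a b \<in> G \<longleftrightarrow> a \<in> G \<or> b \<in> G"
  using thy_MP[OF _ thy_der[OF _ ax6]] thy_MP[OF _ thy_der[OF _ ax7]] unfolding prime_def by blast

lemma der_cut: "derivable A S p \<Longrightarrow> (\<forall>s\<in>S. derivable A H s) \<Longrightarrow> derivable A H p"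
proof (induction rule: derivable.induct)
  case (MP Ax \<Gamma> \<phi> \<psi>) then show ?case using derivable.MP by blast
qed (auto intro: derivable.intros)

lemma ext:
  assumes y: "W A y" and S: "thy A S" and dS: "\<forall>s\<in>S. Dia s \<in> fst y"
  shows "\<exists>w. W A w \<and> cR A y w \<and> S \<subseteq> fst w"
proof (cases "Dia Bot \<in> fst y")
  case True
  then have "cR A y ce" using y W_e W_diabot[OF y True] by (simp add: cR_def ce_def)
  then show ?thesis using W_e by (auto simp: ce_def)
next
  case False
  let ?B = "{f. Box f \<in> fst y}"
  have thG: "thy A (fst y)" using y by (simp add: W_def)
  have nd: "\<not> derivable A (S \<union> ?B) \<pi>" if "\<pi> \<in> insert Bot (snd y)" for \<pi>
  proof
    assume "derivable A (S \<union> ?B) \<pi>"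
    then have "derivable A ((\<lambda>x. x) ` S \<union> ?B) \<pi>" by simp
    from fold[OF S _ _ this] obtain s where s: "s \<in> S" "derivable A (insert s ?B) \<pi>"
      using ax3 ax4 by blast
    have "Box (Imp s \<pi>) \<in> fst y" using box_closure[OF thG deduction[OF s(2)]] .
    moreover have "Dia s \<in> fst y" using dS s by blast
    ultimately have "Dia \<pi> \<in> fst y" using thy_MP[OF thG thy_MP[OF thG thy_der[OF thG kdia]]] by blast
    then show False using that False y by (auto simp: W_def)
  qed
  have dI: "dir A (insert Bot (snd y))" using dir_insert_bot y by (simp add: W_def)
  have nd': "\<forall>\<pi>\<in>insert Bot (snd y). \<not> derivable A (S \<union> ?B) \<pi>" using nd by blast
  from lindenbaum[OF dI nd'] obtain T where T: "S \<union> ?B \<subseteq> T" "thy A T" "prime T" "\<forall>\<pi>\<in>insert Bot (snd y). \<not> derivable A T \<pi>"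
    by blast
  have WT: "W A (T, {})" using T by (simp add: W_def dir_empty)
  have "T \<inter> snd y = {}" "Bot \<notin> T" using T(4) El by blast+
  then have "cR A y (T, {})" using y WT T(1) by (auto simp: cR_def)
  then show ?thesis using WT T(1) by auto
qed

lemma truth: "W A x \<Longrightarrow> forces (cX A) ce (cle A) (cR A) (cV A) x \<phi> \<longleftrightarrow> \<phi> \<in> fst x"
proof (induction \<phi> arbitrary: x)
  case (Var n) then show ?case by (simp add: cV_def)
next
  case Bot
  then show ?case using thy_bot[of A "fst x"] W_univ[of A x] by (auto simp: W_def ce_def)
next
  case (And a b) then show ?case using thy_and[of A "fst x"] by (simp add: W_def)
next
  case (Or a b) then show ?case using thy_or[of A "fst x"] by (simp add: W_def)
next
  case (Imp a b)
  have thx: "thy A (fst x)" using Imp.prems by (simp add: W_def)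
  show ?case
  proof
    assume f: "forces (cX A) ce (cle A) (cR A) (cV A) x (Imp a b)"
    show "Imp a b \<in> fst x"
    proof (rule ccontr)
      assume n: "Imp a b \<notin> fst x"
      have "\<not> derivable A (insert a (fst x)) b" using n deduction thy_mem[OF thx] by blast
      then have "\<forall>\<pi>\<in>{b}. \<not> derivable A (insert a (fst x)) \<pi>" by blast
      from lindenbaum[OF dir_single[of A b] this] obtain T where T: "insert a (fst x) \<subseteq> T" "thy A T" "prime T" "\<not> derivable A T b"
        by blast
      have WT: "W A (T, {})" using T by (simp add: W_def dir_empty)
      have "cle A x (T, {})" using WT T Imp.prems by (auto simp: cle_def)
      moreover have "forces (cX A) ce (cle A) (cR A) (cV A) (T, {}) a" using Imp.IH(1)[OF WT] T by auto
      moreover have "\<not> forces (cX A) ce (cle A) (cR A) (cV A) (T, {}) b" using Imp.IH(2)[OF WT] T El by auto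
      ultimately show False using f WT by (auto simp: cX_def)
    qed
  next
    assume i: "Imp a b \<in> fst x"
    show "forces (cX A) ce (cle A) (cR A) (cV A) x (Imp a b)"
    proof (simp only: forces.simps, intro ballI impI)
      fix y assume y: "y \<in> cX A" "cle A x y" "forces (cX A) ce (cle A) (cR A) (cV A) y a"
      have Wy: "W A y" using y by (simp add: cX_def)
      have "a \<in> fst y" using Imp.IH(1)[OF Wy] y by blast
      moreover have "Imp a b \<in> fst y" using i y by (auto simp: cle_def)
      ultimately have "b \<in> fst y" using thy_MP Wy by (auto simp: W_def)
      then show "forces (cX A) ce (cle A) (cR A) (cV A) y b" using Imp.IH(2)[OF Wy] by blast
    qed
  qed
next
  case (Box a)
  have thx: "thy A (fst x)" using Box.prems by (simp add: W_def)
  show ?case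
  proof
    assume f: "forces (cX A) ce (cle A) (cR A) (cV A) x (Box a)"
    show "Box a \<in> fst x"
    proof (rule ccontr)
      assume n: "Box a \<notin> fst x"
      have "\<not> derivable A {f. Box f \<in> fst x} a" using n box_closure[OF thx] by blast
      then have "\<forall>\<pi>\<in>{a}. \<not> derivable A {f. Box f \<in> fst x} \<pi>" by blast
      from lindenbaum[OF dir_single[of A a] this] obtain T where T: "{f. Box f \<in> fst x} \<subseteq> T" "thy A T" "prime T" "\<not> derivable A T a"
        by blast
      have WT: "W A (T, {})" using T by (simp add: W_def dir_empty)
      have Wy: "W A (fst x, {})" using Box.prems by (simp add: W_def dir_empty)
      have "Bot \<notin> T"
      proof
        assume "Bot \<in> T" then have "T = UNIV" using thy_bot[OF T(2)] by blast
        then show False using T(4) El[of a T A] by simp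
      qed
      then have "cR A (fst x, {}) (T, {})" using WT Wy T by (auto simp: cR_def)
      moreover have "cle A x (fst x, {})" using Wy Box.prems by (auto simp: cle_def)
      moreover have "\<not> forces (cX A) ce (cle A) (cR A) (cV A) (T, {}) a" using Box.IH[OF WT] T El by auto
      ultimately show False using f WT Wy by (auto simp: cX_def)
    qed
  next
    assume i: "Box a \<in> fst x"
    show "forces (cX A) ce (cle A) (cR A) (cV A) x (Box a)"
    proof (simp only: forces.simps, intro ballI impI)
      fix y z assume y: "y \<in> cX A" "z \<in> cX A" "cle A x y" "cR A y z"
      have Wz: "W A z" using y by (simp add: cX_def)
      have "a \<in> fst z" using i y by (auto simp: cle_def cR_def)
      then show "forces (cX A) ce (cle A) (cR A) (cV A) z a" using Box.IH[OF Wz] by blast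
    qed
  qed
next
  case (Dia a)
  have thx: "thy A (fst x)" using Dia.prems by (simp add: W_def)
  show ?case
  proof
    assume f: "forces (cX A) ce (cle A) (cR A) (cV A) x (Dia a)"
    show "Dia a \<in> fst x"
    proof (rule ccontr)
      assume n: "Dia a \<notin> fst x"
      have Wy: "W A (fst x, {a})" using Dia.prems n dir_single by (simp add: W_def)
      have "cle A x (fst x, {a})" using Wy Dia.prems by (auto simp: cle_def)
      moreover have "(fst x, {a}) \<in> cX A" using Wy by (simp add: cX_def)
      ultimately obtain z where z: "z \<in> cX A" "cR A (fst x, {a}) z" "forces (cX A) ce (cle A) (cR A) (cV A) z a"
        using f by (simp only: forces.simps) blast
      have "a \<in> fst z" using Dia.IH z by (auto simp: cX_def)
      then show False using z by (auto simp: cR_def)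
    qed
  next
    assume i: "Dia a \<in> fst x"
    show "forces (cX A) ce (cle A) (cR A) (cV A) x (Dia a)"
    proof (simp only: forces.simps, intro ballI impI)
      fix y assume y: "y \<in> cX A" "cle A x y"
      have Wy: "W A y" using y by (simp add: cX_def)
      have thY: "thy A (fst y)" using Wy by (simp add: W_def)
      let ?S = "{b. derivable A {a} b}"
      have thS: "thy A ?S" unfolding thy_def using der_cut by blast
      have "\<forall>s\<in>?S. Dia s \<in> fst y"
      proof
        fix s assume "s \<in> ?S"
        then have "derivable A {} (Imp a s)" using deduction by auto
        moreover have "Dia a \<in> fst y" using i y by (auto simp: cle_def)
        ultimately show "Dia s \<in> fst y" using thy_MP[OF thY thy_der[OF thY dia_mono]] by blast
      qed
      from ext[OF Wy thS this] obtain w where w: "W A w" "cR A y w" "?S \<subseteq> fst w" by blast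
      have "a \<in> fst w" using w(3) El by blast
      then show "\<exists>z\<in>cX A. cR A y z \<and> forces (cX A) ce (cle A) (cR A) (cV A) z a"
      proof (intro bexI conjI)
        show "w \<in> cX A" using w(1) by (simp add: cX_def)
        show "cR A y w" by (rule w(2))
        show "forces (cX A) ce (cle A) (cR A) (cV A) w a" using Dia.IH[OF w(1)] \<open>a \<in> fst w\<close> by blast
      qed
    qed
  qed
qed



lemma c_ck: "CK_frame (cX A) ce (cle A) (cR A)"
  unfolding CK_frame_def
proof (intro conjI allI impI ballI)
  show "ce \<in> cX A" using W_e by (simp add: cX_def)
  fix x y assume "cle A x y" then show "x \<in> cX A" "y \<in> cX A" by (auto simp: cle_def cX_def)
next
  fix x y assume "cR A x y" then show "x \<in> cX A" "y \<in> cX A" by (auto simp: cR_def cX_def)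
next
  fix x assume "x \<in> cX A" then show "cle A x x" by (simp add: cle_def cX_def)
next
  fix x y z assume "cle A x y" "cle A y z" then show "cle A x z" by (auto simp: cle_def)
next
  fix x assume x: "x \<in> cX A" "cle A ce x"
  then have "fst x = UNIV" by (auto simp: cle_def ce_def)
  then show "x = ce" using W_univ x by (auto simp: cX_def)
next
  fix x assume x: "x \<in> cX A"
  show "cR A ce x \<longleftrightarrow> x = ce"
  proof
    assume "cR A ce x"
    then have "fst x = UNIV" by (auto simp: cR_def ce_def)
    then show "x = ce" using W_univ x by (auto simp: cX_def)
  next
    assume "x = ce" then show "cR A ce x" using W_e by (simp add: cR_def ce_def)
  qed
qed

lemma c_val: "valuation (cX A) ce (cle A) (cV A)"
  unfolding valuation_def using W_e by (auto simp: cV_def cX_def ce_def cle_def)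

lemma c_N: "N_Dia \<in> A \<Longrightarrow> N_suff (cX A) ce (cle A) (cR A)"
  unfolding N_suff_def
proof (intro ballI impI)
  fix x assume N: "N_Dia \<in> A" and x: "x \<in> cX A" "cR A x ce"
  have th: "thy A (fst x)" using x by (simp add: cX_def W_def)
  have "Dia Bot \<in> fst x" using x by (simp add: cR_def ce_def)
  moreover have "Imp (Dia Bot) Bot \<in> fst x" using thy_mem[OF th Ax_extra[OF N N_ax]] .
  ultimately have "Bot \<in> fst x" using thy_MP[OF th] by blast
  then show "x = ce" using thy_bot[OF th] W_univ x by (auto simp: cX_def)
qed

lemma c_C: "C_Dia \<in> A \<Longrightarrow> C_suff (cX A) ce (cle A) (cR A)"
  unfolding C_suff_def
proof (intro ballI)
  fix x assume C: "C_Dia \<in> A" and x: "x \<in> cX A"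
  have Wx: "W A x" using x by (simp add: cX_def)
  have th: "thy A (fst x)" and pr: "prime (fst x)" using Wx by (simp_all add: W_def)
  define D where "D = {\<psi>. Dia \<psi> \<notin> fst x}"
  have "dir A D"
    unfolding dir_def
  proof (intro ballI)
    fix a b assume ab: "a \<in> D" "b \<in> D"
    have "Or a b \<in> D"
    proof (rule ccontr)
      assume "Or a b \<notin> D"
      then have "Dia (Or a b) \<in> fst x" by (simp add: D_def)
      moreover have "Imp (Dia (Or a b)) (Or (Dia a) (Dia b)) \<in> fst x" using thy_mem[OF th Ax_extra[OF C C_ax]] .
      ultimately have "Or (Dia a) (Dia b) \<in> fst x" using thy_MP[OF th] by blast
      then show False using ab pr unfolding prime_def D_def by blast
    qed
    then show "\<exists>c\<in>D. derivable A {} (Imp (Or a b) c)" using der_id by blast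
  qed
  then have Wx': "W A (fst x, D)" using th pr by (simp add: W_def D_def)
  show "\<exists>x'\<in>cX A. cle A x x' \<and> (\<forall>y\<in>cX A. \<forall>z\<in>cX A. cle A x y \<longrightarrow> cR A x' z \<longrightarrow> (\<exists>w\<in>cX A. cR A y w \<and> cle A z w))"
  proof (rule bexI[of _ "(fst x, D)"], intro conjI ballI impI)
    show "(fst x, D) \<in> cX A" using Wx' by (simp add: cX_def)
    show "cle A x (fst x, D)" using Wx Wx' by (simp add: cle_def)
    fix y z assume yz: "y \<in> cX A" "z \<in> cX A" "cle A x y" "cR A (fst x, D) z"
    have Wy: "W A y" and Wz: "W A z" using yz by (simp_all add: cX_def)
    have thz: "thy A (fst z)" using Wz by (simp add: W_def)
    have "\<forall>s\<in>fst z. Dia s \<in> fst y"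
    proof
      fix s assume "s \<in> fst z"
      then have "Dia s \<in> fst x" using yz(4) by (auto simp: cR_def D_def)
      then show "Dia s \<in> fst y" using yz(3) by (auto simp: cle_def)
    qed
    from ext[OF Wy thz this] obtain w where w: "W A w" "cR A y w" "fst z \<subseteq> fst w" by blast
    show "\<exists>w\<in>cX A. cR A y w \<and> cle A z w"
      using w Wz by (intro bexI[of _ w]) (auto simp: cX_def cle_def)
  qed
qed

lemma c_I: "I_DiaBox \<in> A \<Longrightarrow> I_suff (cX A) ce (cle A) (cR A)"
  unfolding I_suff_def
proof (intro ballI impI)
  fix x y z assume I: "I_DiaBox \<in> A" and xyz: "x \<in> cX A" "y \<in> cX A" "z \<in> cX A" "cR A x y" "cle A y z"
  have Wx: "W A x" and Wy: "W A y" and Wz: "W A z" using xyz by (simp_all add: cX_def)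
  have thx: "thy A (fst x)" using Wx by (simp add: W_def)
  have thz: "thy A (fst z)" and prz: "prime (fst z)" using Wz by (simp_all add: W_def)
  show "\<exists>u\<in>cX A. cle A x u \<and> cR A u z \<and> (\<forall>s\<in>cX A. cle A u s \<longrightarrow> (\<exists>t\<in>cX A. cR A s t \<and> cle A z t))"
  proof (cases "fst z = UNIV")
    case True
    then have z: "z = ce" using W_univ Wz by blast
    show ?thesis
    proof (rule bexI[of _ ce], intro conjI ballI impI)
      show "ce \<in> cX A" using W_e by (simp add: cX_def)
      show "cle A x ce" using Wx W_e by (simp add: cle_def ce_def)
      show "cR A ce z" using z W_e by (simp add: cR_def ce_def)
      fix s assume s: "s \<in> cX A" "cle A ce s"
      then have "fst s = UNIV" by (auto simp: cle_def ce_def)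
      then have "s = ce" using W_univ s(1) by (simp add: cX_def)
      then show "\<exists>t\<in>cX A. cR A s t \<and> cle A z t" using z W_e by (auto simp: cR_def cle_def ce_def cX_def)
    qed
  next
    case False
    have botz: "Bot \<notin> fst z" using False thy_bot[OF thz] by blast
    let ?P = "Box ` (- fst z)"
    have dP: "dir A ?P"
      unfolding dir_def
    proof (intro ballI)
      fix a b assume ab: "a \<in> ?P" "b \<in> ?P"
      then obtain a' b' where a': "a = Box a'" "a' \<notin> fst z" and b': "b = Box b'" "b' \<notin> fst z" by blast
      have "Or a' b' \<notin> fst z" using a' b' prz unfolding prime_def by blast
      moreover have "derivable A {} (Imp (Or a b) (Box (Or a' b')))"
        unfolding a' b' by (rule or_imp[OF box_mono[OF ax6] box_mono[OF ax7]])
      ultimately show "\<exists>c\<in>?P. derivable A {} (Imp (Or a b) c)" by blast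
    qed
    have nd: "\<forall>\<pi>\<in>?P. \<not> derivable A (Dia ` fst z \<union> fst x) \<pi>"
    proof (intro ballI notI)
      fix \<pi> assume p: "\<pi> \<in> ?P" and d: "derivable A (Dia ` fst z \<union> fst x) \<pi>"
      obtain c where c: "\<pi> = Box c" "c \<notin> fst z" using p by blast
      from fold[OF thz _ _ d] obtain s where s: "s \<in> fst z" "derivable A (insert (Dia s) (fst x)) \<pi>"
        using dia_mono[OF ax3] dia_mono[OF ax4] by blast
      have "derivable A (fst x) (Imp (Dia s) (Box c))" using deduction[OF s(2)] c by simp
      moreover have "derivable A (fst x) (Imp (Imp (Dia s) (Box c)) (Box (Imp s c)))"
        using Ax_extra[OF I I_ax] .
      ultimately have "Box (Imp s c) \<in> fst x" using MP thy_mem[OF thx] by blast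
      then have "Imp s c \<in> fst y" using xyz(4) by (auto simp: cR_def)
      then have "Imp s c \<in> fst z" using xyz(5) by (auto simp: cle_def)
      then have "c \<in> fst z" using thy_MP[OF thz] s(1) by blast
      then show False using c by blast
    qed
    from lindenbaum[OF dP nd] obtain T where T: "Dia ` fst z \<union> fst x \<subseteq> T" "thy A T" "prime T"
      "\<forall>\<pi>\<in>?P. \<not> derivable A T \<pi>" by blast
    have WT: "W A (T, {})" using T by (simp add: W_def dir_empty)
    have boxT: "{f. Box f \<in> T} \<subseteq> fst z"
    proof
      fix f assume "f \<in> {f. Box f \<in> T}"
      then have "Box f \<in> T" by simp
      then have "derivable A T (Box f)" by (rule El)
      then show "f \<in> fst z" using T(4) by blast
    qed
    show ?thesis
    proof (rule bexI[of _ "(T, {})"], intro conjI ballI impI)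
      show "(T, {}) \<in> cX A" using WT by (simp add: cX_def)
      show "cle A x (T, {})" using Wx WT T(1) by (auto simp: cle_def)
      show "cR A (T, {}) z" using WT Wz boxT botz by (simp add: cR_def)
      fix s assume s: "s \<in> cX A" "cle A (T, {}) s"
      have Ws: "W A s" using s by (simp add: cX_def)
      have "\<forall>\<sigma>\<in>fst z. Dia \<sigma> \<in> fst s" using s T(1) by (auto simp: cle_def)
      from ext[OF Ws thz this] obtain w where w: "W A w" "cR A s w" "fst z \<subseteq> fst w" by blast
      show "\<exists>t\<in>cX A. cR A s t \<and> cle A z t"
        using w Wz by (intro bexI[of _ w]) (auto simp: cX_def cle_def)
    qed
  qed
qed

lemma c_class: "frame_class A (cX A) ce (cle A) (cR A)"
  unfolding frame_class_def using c_ck c_N c_C c_I N_suff_corr[OF c_ck] by simp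

lemma completeness_can:
  assumes "\<not> derivable A \<Gamma> \<phi>"
  shows "\<exists>x\<in>cX A. (\<forall>\<gamma>\<in>\<Gamma>. forces (cX A) ce (cle A) (cR A) (cV A) x \<gamma>) \<and> \<not> forces (cX A) ce (cle A) (cR A) (cV A) x \<phi>"
proof -
  have "\<forall>\<pi>\<in>{\<phi>}. \<not> derivable A \<Gamma> \<pi>" using assms by blast
  from lindenbaum[OF dir_single this] obtain T where T: "\<Gamma> \<subseteq> T" "thy A T" "prime T" "\<not> derivable A T \<phi>" by blast
  have WT: "W A (T, {})" using T by (simp add: W_def dir_empty)
  have "\<phi> \<notin> T" using T(4) El by blast
  then show ?thesis using WT T(1) truth[OF WT] by (auto simp: cX_def)
qed



lemma ball_img: "(\<forall>b\<in>h ` X. P b) = (\<forall>y\<in>X. P (h y))" by blast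
lemma bex_img: "(\<exists>b\<in>h ` X. P b) = (\<exists>y\<in>X. P (h y))" by blast

lemma transfer:
  fixes h :: "'a \<Rightarrow> 'b" and X :: "'a set"
  assumes inj: "inj h" and fc: "frame_class A X e le R" and val: "valuation X e le V"
    and x: "x \<in> X" and G: "\<forall>\<gamma>\<in>\<Gamma>. forces X e le R V x \<gamma>" and n: "\<not> forces X e le R V x \<phi>"
  shows "\<not> sem_conseq TYPE('b) A \<Gamma> \<phi>"
proof -
  define X' where "X' = h ` X"
  define e' where "e' = h e"
  define le' where "le' a b \<longleftrightarrow> (\<exists>u v. a = h u \<and> b = h v \<and> le u v)" for a b
  define R' where "R' a b \<longleftrightarrow> (\<exists>u v. a = h u \<and> b = h v \<and> R u v)" for a b
  define V' where "V' p = h ` V p" for p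
  have leh: "le' (h u) (h v) = le u v" for u v using inj unfolding le'_def inj_def by blast
  have Rh: "R' (h u) (h v) = R u v" for u v using inj unfolding R'_def inj_def by blast
  have hh: "(h u = h v) = (u = v)" for u v using inj unfolding inj_def by blast
  have Vh: "(h u \<in> V' p) = (u \<in> V p)" for u p using inj unfolding V'_def inj_def by blast
  have fh: "forces X' e' le' R' V' (h u) \<psi> = forces X e le R V u \<psi>" for u \<psi>
  proof (induction \<psi> arbitrary: u)
    case (Var n) then show ?case by (simp add: Vh)
  next
    case Bot then show ?case by (simp add: e'_def hh)
  next
    case (Imp a b) then show ?case by (simp add: X'_def ball_img leh)
  next
    case (Box a) then show ?case by (simp add: X'_def ball_img leh Rh)
  next
    case (Dia a) then show ?case by (simp add: X'_def ball_img bex_img leh Rh)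
  qed simp_all
  have ck: "CK_frame X e le R" using fc by (simp add: frame_class_def)
  have le'E: "le' a b \<Longrightarrow> \<exists>u v. a = h u \<and> b = h v \<and> le u v" for a b by (simp add: le'_def)
  have R'E: "R' a b \<Longrightarrow> \<exists>u v. a = h u \<and> b = h v \<and> R u v" for a b by (simp add: R'_def)
  have c1: "\<forall>x y. le x y \<longrightarrow> x \<in> X \<and> y \<in> X" using ck by (simp add: CK_frame_def)
  have c2: "\<forall>x y. R x y \<longrightarrow> x \<in> X \<and> y \<in> X" using ck by (simp add: CK_frame_def)
  have c3: "\<forall>x\<in>X. le x x" using ck by (simp add: CK_frame_def)
  have c4: "\<forall>x y z. le x y \<longrightarrow> le y z \<longrightarrow> le x z" using ck by (simp add: CK_frame_def)
  have c5: "\<forall>x\<in>X. le e x \<longrightarrow> x = e" using ck by (simp add: CK_frame_def)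
  have c6: "\<forall>x\<in>X. R e x \<longleftrightarrow> x = e" using ck by (simp add: CK_frame_def)
  have c0: "e \<in> X" using ck by (simp add: CK_frame_def)
  have ck': "CK_frame X' e' le' R'"
    unfolding CK_frame_def
  proof (intro conjI allI impI ballI)
    show "e' \<in> X'" using c0 by (simp add: X'_def e'_def)
    fix a b assume "le' a b"
    then obtain u v where "a = h u" "b = h v" "le u v" using le'E by blast
    then show "a \<in> X'" "b \<in> X'" using c1 unfolding X'_def by blast+
  next
    fix a b assume "R' a b"
    then obtain u v where "a = h u" "b = h v" "R u v" using R'E by blast
    then show "a \<in> X'" "b \<in> X'" using c2 unfolding X'_def by blast+
  next
    fix a assume "a \<in> X'" then show "le' a a" using c3 leh unfolding X'_def by auto
  next
    fix a b c assume "le' a b" "le' b c"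
    then obtain u v v' w where "a = h u" "b = h v" "le u v" "b = h v'" "c = h w" "le v' w" using le'E by metis
    then show "le' a c" using c4 leh hh by metis
  next
    fix a assume "a \<in> X'" "le' e' a" then show "a = e'" using c5 leh unfolding X'_def e'_def by auto
  next
    fix a assume "a \<in> X'" then show "R' e' a \<longleftrightarrow> a = e'" using c6 Rh hh unfolding X'_def e'_def by auto
  qed
  have v0: "\<forall>p. V p \<subseteq> X \<and> e \<in> V p \<and> (\<forall>x y. x \<in> V p \<longrightarrow> le x y \<longrightarrow> y \<in> V p)"
    using val by (simp add: valuation_def)
  have val': "valuation X' e' le' V'"
    unfolding valuation_def
  proof (intro allI conjI impI)
    fix p show "V' p \<subseteq> X'" using v0 unfolding V'_def X'_def by blast
    show "e' \<in> V' p" using v0 unfolding V'_def e'_def by blast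
    fix a b assume ab: "a \<in> V' p" "le' a b"
    then obtain u where u: "u \<in> V p" "a = h u" unfolding V'_def by blast
    obtain u' v where uv: "a = h u'" "b = h v" "le u' v" using le'E ab(2) by blast
    have "u = u'" using u(2) uv(1) hh by simp
    then show "b \<in> V' p" using v0 u uv unfolding V'_def by blast
  qed
  have Nc: "N_corr X e le R \<Longrightarrow> N_corr X' e' le' R'"
    unfolding N_corr_def X'_def e'_def by (simp add: ball_img leh Rh hh)
  have Ns: "N_suff X e le R \<Longrightarrow> N_suff X' e' le' R'"
    unfolding N_suff_def X'_def e'_def by (simp add: ball_img leh Rh hh)
  have Cs: "C_suff X e le R \<Longrightarrow> C_suff X' e' le' R'"
    unfolding C_suff_def X'_def e'_def by (simp add: ball_img bex_img leh Rh hh)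
  have Is: "I_suff X e le R \<Longrightarrow> I_suff X' e' le' R'"
    unfolding I_suff_def X'_def e'_def by (simp add: ball_img bex_img leh Rh hh)
  have fc': "frame_class A X' e' le' R'"
    using fc ck' Nc Ns Cs Is unfolding frame_class_def by (auto split: if_splits)
  have "h x \<in> X'" using x by (simp add: X'_def)
  moreover have "\<forall>\<gamma>\<in>\<Gamma>. forces X' e' le' R' V' (h x) \<gamma>" using G fh by blast
  moreover have "\<not> forces X' e' le' R' V' (h x) \<phi>" using n fh by blast
  ultimately show ?thesis using fc' val' unfolding sem_conseq_def by blast
qed

lemma inj_g: "inj (\<lambda>(G, P). {Box ` G, insert Bot (Dia ` P)})"
proof (rule injI, clarify)
  fix G P G' P'
  assume eq: "{Box ` G, insert Bot (Dia ` P)} = {Box ` G', insert Bot (Dia ` P')}"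
  have n1: "Box ` G \<noteq> insert Bot (Dia ` P')" by auto
  have n2: "Box ` G' \<noteq> insert Bot (Dia ` P)" by auto
  have e1: "Box ` G = Box ` G'" and e2: "insert Bot (Dia ` P) = insert Bot (Dia ` P')"
    using eq n1 n2 by (auto simp: doubleton_eq_iff)
  have "G = G'" using e1 by (simp add: inj_image_eq_iff inj_def)
  moreover have "Dia ` P = Dia ` P'"
  proof
    show "Dia ` P \<subseteq> Dia ` P'" using e2 by blast
    show "Dia ` P' \<subseteq> Dia ` P" using e2 by blast
  qed
  then have "P = P'" by (simp add: inj_image_eq_iff inj_def)
  ultimately show "G = G' \<and> P = P'" by blast
qed

theorem mainTheorem9:
  fixes Ax :: "ax set" and \<Gamma> :: "form set" and \<phi> :: form
  assumes big: "\<exists>f :: form set set \<Rightarrow> 'w. inj f"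
  shows "(derivable Ax \<Gamma> \<phi> \<longrightarrow> sem_conseq TYPE('v) Ax \<Gamma> \<phi>)
       \<and> (derivable Ax \<Gamma> \<phi> \<longleftrightarrow> sem_conseq TYPE('w) Ax \<Gamma> \<phi>)"
proof (intro conjI impI iffI)
  assume "derivable Ax \<Gamma> \<phi>" then show "sem_conseq TYPE('v) Ax \<Gamma> \<phi>" by (rule soundness)
next
  assume "derivable Ax \<Gamma> \<phi>" then show "sem_conseq TYPE('w) Ax \<Gamma> \<phi>" by (rule soundness)
next
  assume s: "sem_conseq TYPE('w) Ax \<Gamma> \<phi>"
  show "derivable Ax \<Gamma> \<phi>"
  proof (rule ccontr)
    assume nd: "\<not> derivable Ax \<Gamma> \<phi>"
    obtain f :: "form set set \<Rightarrow> 'w" where f: "inj f" using big by blast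
    define h :: "form set \<times> form set \<Rightarrow> 'w" where "h = f \<circ> (\<lambda>(G, P). {Box ` G, insert Bot (Dia ` P)})"
    have ih: "inj h" unfolding h_def using f inj_g by (rule inj_compose)
    from completeness_can[OF nd] obtain x where x: "x \<in> cX Ax"
      "\<forall>\<gamma>\<in>\<Gamma>. forces (cX Ax) ce (cle Ax) (cR Ax) (cV Ax) x \<gamma>" "\<not> forces (cX Ax) ce (cle Ax) (cR Ax) (cV Ax) x \<phi>"
      by blast
    have "\<not> sem_conseq TYPE('w) Ax \<Gamma> \<phi>"
      by (rule transfer[OF ih c_class c_val x])
    then show False using s by blast
  qed
qed


end
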